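(* Let $u$ be the field with $u(x+\tfrac12,t+\tfrac12)=-1$ if both integers $x$ and $t$ are even and $u(x+\tfrac12,t+\tfrac12)=+1$ otherwise. For integers $x,t$ with $x+t$ even and $t>0$ set $b_1(x,t)=a_1(2x-1,2t-1,u)$ and $b_2(x,t)=a_2(2x-1,2t-1,u)$, and for $x+t$ odd set $b_1(x,t)=b_2(x,t)=0$. Then for all integers $x,t$ with $x+t$ even and $t>1$: $$b_1(x,t)=\tfrac12\big[b_1(x+1,t-1)+b_2(x+1,t-1)\big],\qquad b_2(x,t)=\tfrac12\big[3\,b_1(x-1,t-1)-b_2(x-1,t-1)\big].$$
   Context: A checker path is a finite sequence of integer points $s_0,s_1,\dots,s_t$ in the plane such that each vector $s_{k+1}-s_k$ equals $(1,1)$ or $(-1,1)$. A turn is a point $s_k$ with $0<k<t$ such that the vectors $s_{k+1}-s_k$ and $s_{k-1}-s_k$ are orthogonal; $\mathrm{turns}(s)$ is the number of turns. An edge is a segment joining two diagonally adjacent integer points (differing by $(\pm1,1)$) whose coordinate sums are even; every step $s_ks_{k+1}$ of a checker path starting at $(0,0)$ is an edge. A field is a map $u$ from edges to $\{-1,1\}$; for half-integers $x,t$, $u(x,t)$ denotes the value of $u$ on the edge with midpoint $(x,t)$. For integers $x$ and $t\ge 1$ define $$a(x,t,u):=2^{(1-t)/2}\, i\sum_s(-i)^{\mathrm{turns}(s)}u(s_0s_1)u(s_1s_2)\cdots u(s_{t-1}s_t),$$ the sum over all checker paths $s=(s_0,\dots,s_t)$ with $s_0=(0,0)$, $s_1=(1,1)$,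 $s_t=(x,t)$ (an empty sum is $0$). Let $a_1(x,t,u)$ and $a_2(x,t,u)$ be the real and imaginary parts of $a(x,t,u)$. *)

theory Defs
  imports Complex_Main
begin

type_synonym point = "int \<times> int"

text \<open>A field is represented by its values at edge midpoints: u (x, t) is the value on the
  edge with midpoint (x, t).\<close>
type_synonym field = "real \<times> real \<Rightarrow> real"

definition checker_path :: "point list \<Rightarrow> bool" where
  "checker_path s \<longleftrightarrow> s \<noteq> [] \<and>
     (\<forall>k. Suc k < length s \<longrightarrow>
        (fst (s ! Suc k) - fst (s ! k), snd (s ! Suc k) - snd (s ! k)) \<in> {(1, 1), (-1, 1)})"

definition is_turn :: "point list \<Rightarrow> nat \<Rightarrow> bool" where
  "is_turn s k \<longleftrightarrow> 0 < k \<and> Suc k < length s \<and>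
     (fst (s ! Suc k) - fst (s ! k)) * (fst (s ! (k - 1)) - fst (s ! k))
   + (snd (s ! Suc k) - snd (s ! k)) * (snd (s ! (k - 1)) - snd (s ! k)) = 0"

definition turns :: "point list \<Rightarrow> nat" where
  "turns s = card {k. is_turn s k}"

definition edge_val :: "field \<Rightarrow> point \<Rightarrow> point \<Rightarrow> real" where
  "edge_val u p q = u ((real_of_int (fst p) + real_of_int (fst q)) / 2,
                      (real_of_int (snd p) + real_of_int (snd q)) / 2)"

definition paths :: "int \<Rightarrow> int \<Rightarrow> point list set" where
  "paths x t = {s. checker_path s \<and> length s = nat t + 1 \<and>
      s ! 0 = (0, 0) \<and> s ! 1 = (1, 1) \<and> s ! nat t = (x, t)}"

definition amp :: "int \<Rightarrow> int \<Rightarrow> field \<Rightarrow> complex" where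
  "amp x t u = complex_of_real (2 powr ((1 - real_of_int t) / 2)) * \<i> *
     (\<Sum>s\<in>paths x t. (- \<i>) ^ turns s *
        complex_of_real (\<Prod>k<nat t. edge_val u (s ! k) (s ! Suc k)))"

definition a1 :: "int \<Rightarrow> int \<Rightarrow> field \<Rightarrow> real" where
  "a1 x t u = Re (amp x t u)"

definition a2 :: "int \<Rightarrow> int \<Rightarrow> field \<Rightarrow> real" where
  "a2 x t u = Im (amp x t u)"

definition u0 :: field where
  "u0 m = (if \<exists>x t :: int. even x \<and> even t \<and>
                 m = (real_of_int x + 1/2, real_of_int t + 1/2) then -1 else 1)"

definition b1 :: "int \<Rightarrow> int \<Rightarrow> real" where
  "b1 x t = (if even (x + t) \<and> t > 0 then a1 (2*x - 1) (2*t - 1) u0 else 0)"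

definition b2 :: "int \<Rightarrow> int \<Rightarrow> real" where
  "b2 x t = (if even (x + t) \<and> t > 0 then a2 (2*x - 1) (2*t - 1) u0 else 0)"

end

theory Submission
  imports Defs
begin

lemma paths_mem: "s \<in> paths x (int n) \<longleftrightarrow> checker_path s \<and> length s = n+1 \<and> s!0 = (0,0) \<and> s!1 = (1,1) \<and> s!n = (x, int n)"
  by (simp add: paths_def)

lemma step_last:
  assumes "s \<in> paths z (int n)" "n \<ge> 1"
  shows "snd (s!(n-1)) = int n - 1 \<and> (fst (s!(n-1)) = z+1 \<or> fst (s!(n-1)) = z-1)"
proof -
  have c: "checker_path s" and l: "length s = n+1" and e: "s!n = (z, int n)" using assms by (auto simp: paths_mem)
  have "Suc (n-1) < length s" using l assms(2) by simp
  then have "(fst (s ! Suc (n-1)) - fst (s ! (n-1)), snd (s ! Suc (n-1)) - snd (s ! (n-1))) \<in> {(1, 1), (-1, 1)}"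
    using c unfolding checker_path_def by blast
  moreover have "Suc (n-1) = n" using assms(2) by simp
  ultimately show ?thesis using e by auto
qed

lemma snoc_mem:
  assumes "s \<in> paths z (int n)" "n \<ge> 1" "x = z+1 \<or> x = z-1"
  shows "s @ [(x, int n + 1)] \<in> paths x (int (Suc n))"
proof -
  have c: "checker_path s" and l: "length s = n+1" and e: "s!n = (z, int n)"
    and s0: "s!0 = (0,0)" and s1: "s!1 = (1,1)" using assms by (auto simp: paths_mem)
  have "checker_path (s @ [(x, int n + 1)])"
    unfolding checker_path_def
  proof (intro conjI allI impI)
    fix k assume k: "Suc k < length (s @ [(x, int n + 1)])"
    show "(fst ((s @ [(x, int n + 1)]) ! Suc k) - fst ((s @ [(x, int n + 1)]) ! k),
          snd ((s @ [(x, int n + 1)]) ! Suc k) - snd ((s @ [(x, int n + 1)]) ! k)) \<in> {(1, 1), (- 1, 1)}"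
    proof (cases "Suc k < length s")
      case True
      then show ?thesis using c unfolding checker_path_def by (auto simp: nth_append)
    next
      case False
      then have "k = n" using k l by auto
      then show ?thesis using e l assms(3) by (auto simp: nth_append)
    qed
  qed simp
  then show ?thesis unfolding paths_mem using l e s0 s1 assms(2) by (auto simp: nth_append)
qed

lemma snoc_inv:
  assumes "s' \<in> paths x (int (Suc n))" "n \<ge> 1"
  shows "\<exists>z s. s' = s @ [(x, int n + 1)] \<and> s \<in> paths z (int n) \<and> (z = x+1 \<or> z = x-1) \<and> z = fst (s'!n)"
proof -
  have c: "checker_path s'" and l: "length s' = n+2" and e: "s'!Suc n = (x, int n + 1)"
    and s0: "s'!0 = (0,0)" and s1: "s'!1 = (1,1)" using assms(1) unfolding paths_mem by auto
  have st: "(fst (s' ! Suc n) - fst (s' ! n), snd (s' ! Suc n) - snd (s' ! n)) \<in> {(1, 1), (-1, 1)}"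
    using c l unfolding checker_path_def by auto
  define s where "s = take (n+1) s'"
  have ss: "s' = s @ [(x, int n + 1)]"
  proof -
    have "s' = take (n+1) s' @ drop (n+1) s'" by simp
    moreover have "drop (n+1) s' = [s' ! Suc n]" using l
      by (metis Cons_nth_drop_Suc One_nat_def Suc_eq_plus1 add_2_eq_Suc' drop_all le_refl lessI)
    ultimately show ?thesis using e s_def by (metis append_take_drop_id)
  qed
  have ls: "length s = n+1" using l s_def by simp
  have "checker_path s" using c l s_def unfolding checker_path_def by auto
  moreover have "s!n = (fst (s'!n), int n)" using st e s_def by (cases "s'!n") auto
  ultimately have "s \<in> paths (fst (s'!n)) (int n)" using ls s0 s1 assms(2) s_def by (auto simp: paths_mem)
  moreover have "fst (s'!n) = x+1 \<or> fst (s'!n) = x-1" using st e by auto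
  ultimately show ?thesis using ss by blast
qed

lemma turns_snoc:
  assumes "s \<in> paths z (int n)" "n \<ge> 1" "x = z+1 \<or> x = z-1"
  shows "turns (s @ [(x, int n + 1)]) = turns s + (if fst (s!(n-1)) = x then 1 else 0)"
proof -
  have l: "length s = n+1" and e: "s!n = (z, int n)" using assms by (auto simp: paths_mem)
  have sl: "snd (s!(n-1)) = int n - 1 \<and> (fst (s!(n-1)) = z+1 \<or> fst (s!(n-1)) = z-1)"
    using step_last[OF assms(1,2)] .
  define s' where "s' = s @ [(x, int n + 1)]"
  have iff: "is_turn s' k \<longleftrightarrow> is_turn s k \<or> (k = n \<and> fst (s!(n-1)) = x)" for k
  proof (cases "k < n")
    case True
    then have "s'!k = s!k" "s'!Suc k = s!Suc k" "s'!(k-1) = s!(k-1)" using l s'_def by (auto simp: nth_append)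
    then show ?thesis unfolding is_turn_def using True l s'_def by auto
  next
    case False
    show ?thesis
    proof (cases "k = n")
      case True
      have a: "s'!Suc n = (x, int n + 1)" "s'!n = (z, int n)" "s'!(n-1) = s!(n-1)"
        using l e s'_def assms(2) by (auto simp: nth_append)
      have nt: "\<not> is_turn s n" unfolding is_turn_def using l by auto
      have "is_turn s' n \<longleftrightarrow> (x - z) * (fst (s!(n-1)) - z) + 1 * (snd (s!(n-1)) - int n) = 0"
        unfolding is_turn_def using a l s'_def assms(2) by auto
      also have "\<dots> \<longleftrightarrow> fst (s!(n-1)) = x" using sl assms(3) by auto
      finally show ?thesis using True nt by auto
    next
      case False
      then show ?thesis using \<open>\<not> k < n\<close> l s'_def unfolding is_turn_def by auto
    qed
  qed
  have fin: "finite {k. is_turn s k}"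
    by (rule finite_subset[of _ "{..<length s}"]) (auto simp: is_turn_def)
  have nn: "n \<notin> {k. is_turn s k}" using l by (auto simp: is_turn_def)
  have "{k. is_turn s' k} = {k. is_turn s k} \<union> (if fst (s!(n-1)) = x then {n} else {})"
    using iff by auto
  then show ?thesis unfolding turns_def s'_def[symmetric] using fin nn by (auto simp: card_insert_if)
qed

lemma paths_finite: "n \<ge> 1 \<Longrightarrow> finite (paths z (int n))"
proof (induction n arbitrary: z rule: nat_induct_at_least)
  case base
  have "paths z (int 1) \<subseteq> {[(0,0),(1,1)]}"
  proof
    fix s assume "s \<in> paths z (int 1)"
    then have "length s = 2" "s!0 = (0,0)" "s!1 = (1,1)" unfolding paths_mem by auto
    then show "s \<in> {[(0,0),(1,1)]}"
      by (cases s; cases "tl s"; auto)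
  qed
  then show ?case by (rule finite_subset) simp
next
  case (Suc n)
  have "paths z (int (Suc n)) \<subseteq> (\<lambda>s. s @ [(z, int n + 1)]) ` (paths (z+1) (int n) \<union> paths (z-1) (int n))"
  proof
    fix s' assume "s' \<in> paths z (int (Suc n))"
    from snoc_inv[OF this Suc.hyps] show "s' \<in> (\<lambda>s. s @ [(z, int n + 1)]) ` (paths (z+1) (int n) \<union> paths (z-1) (int n))"
      by blast
  qed
  then show ?case by (rule finite_subset) (use Suc.IH in auto)
qed

definition wt :: "field \<Rightarrow> nat \<Rightarrow> point list \<Rightarrow> complex" where
  "wt u n s = (-\<i>) ^ turns s * complex_of_real (\<Prod>k<n. edge_val u (s!k) (s!Suc k))"

definition Lsum :: "field \<Rightarrow> int \<Rightarrow> nat \<Rightarrow> complex" where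
  "Lsum u z n = (\<Sum>s\<in>{s\<in>paths z (int n). fst (s!(n-1)) = z+1}. wt u n s)"

definition Rsum :: "field \<Rightarrow> int \<Rightarrow> nat \<Rightarrow> complex" where
  "Rsum u z n = (\<Sum>s\<in>{s\<in>paths z (int n). fst (s!(n-1)) = z-1}. wt u n s)"

lemma wt_snoc:
  assumes "s \<in> paths z (int n)" "n \<ge> 1" "x = z+1 \<or> x = z-1"
  shows "wt u (Suc n) (s @ [(x, int n + 1)]) =
    (if fst (s!(n-1)) = x then -\<i> else 1) * complex_of_real (edge_val u (z, int n) (x, int n + 1)) * wt u n s"
proof -
  have l: "length s = n+1" and e: "s!n = (z, int n)" using assms by (auto simp: paths_mem)
  have p: "(\<Prod>k<Suc n. edge_val u ((s @ [(x, int n + 1)])!k) ((s @ [(x, int n + 1)])!Suc k))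
    = (\<Prod>k<n. edge_val u (s!k) (s!Suc k)) * edge_val u (z, int n) (x, int n + 1)"
    using l e by (auto simp: nth_append intro!: prod.cong)
  show ?thesis unfolding wt_def p turns_snoc[OF assms] by (simp add: power_add)
qed

lemma split_paths:
  assumes "n \<ge> 1"
  shows "(\<Sum>s\<in>paths z (int n). f s) = (\<Sum>s\<in>{s\<in>paths z (int n). fst (s!(n-1)) = z+1}. f s)
     + (\<Sum>s\<in>{s\<in>paths z (int n). fst (s!(n-1)) = z-1}. f s)"
proof -
  have fin: "finite (paths z (int n))" using paths_finite assms by blast
  have eq: "paths z (int n) = {s\<in>paths z (int n). fst (s!(n-1)) = z+1} \<union> {s\<in>paths z (int n). fst (s!(n-1)) = z-1}"
    using step_last assms by blast
  show ?thesis by (subst eq, rule sum.union_disjoint) (use fin in auto)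
qed

lemma sum_snoc:
  assumes "n \<ge> 1" "x = z+1 \<or> x = z-1"
  shows "(\<Sum>s\<in>paths z (int n). wt u (Suc n) (s @ [(x, int n + 1)])) =
    complex_of_real (edge_val u (z, int n) (x, int n + 1)) *
     ((if z+1 = x then -\<i> else 1) * Lsum u z n + (if z-1 = x then -\<i> else 1) * Rsum u z n)"
proof -
  let ?e = "complex_of_real (edge_val u (z, int n) (x, int n + 1))"
  have 1: "(\<Sum>s\<in>{s\<in>paths z (int n). fst (s!(n-1)) = z+1}. wt u (Suc n) (s @ [(x, int n + 1)]))
     = (\<Sum>s\<in>{s\<in>paths z (int n). fst (s!(n-1)) = z+1}. ((if z+1 = x then -\<i> else 1) * ?e) * wt u n s)"
  proof (rule sum.cong[OF refl])
    fix s assume "s \<in> {s\<in>paths z (int n). fst (s!(n-1)) = z+1}"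
    then show "wt u (Suc n) (s @ [(x, int n + 1)]) = ((if z+1 = x then -\<i> else 1) * ?e) * wt u n s"
      using wt_snoc[of s z n x u] assms by auto
  qed
  have 2: "(\<Sum>s\<in>{s\<in>paths z (int n). fst (s!(n-1)) = z-1}. wt u (Suc n) (s @ [(x, int n + 1)]))
     = (\<Sum>s\<in>{s\<in>paths z (int n). fst (s!(n-1)) = z-1}. ((if z-1 = x then -\<i> else 1) * ?e) * wt u n s)"
  proof (rule sum.cong[OF refl])
    fix s assume "s \<in> {s\<in>paths z (int n). fst (s!(n-1)) = z-1}"
    then show "wt u (Suc n) (s @ [(x, int n + 1)]) = ((if z-1 = x then -\<i> else 1) * ?e) * wt u n s"
      using wt_snoc[of s z n x u] assms by auto
  qed
  show ?thesis unfolding split_paths[OF assms(1)] 1 2 Lsum_def Rsum_def sum_distrib_left[symmetric]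
    by (simp add: algebra_simps)
qed

lemma paths_snoc_set:
  assumes "n \<ge> 1" "z = x+1 \<or> z = x-1"
  shows "{s'\<in>paths x (int (Suc n)). fst (s'!n) = z} = (\<lambda>s. s @ [(x, int n + 1)]) ` paths z (int n)"
proof
  show "{s'\<in>paths x (int (Suc n)). fst (s'!n) = z} \<subseteq> (\<lambda>s. s @ [(x, int n + 1)]) ` paths z (int n)"
  proof
    fix s' assume a: "s' \<in> {s'\<in>paths x (int (Suc n)). fst (s'!n) = z}"
    then obtain z' s where "s' = s @ [(x, int n + 1)]" "s \<in> paths z' (int n)" "z' = fst (s'!n)"
      using snoc_inv[of s' x n] assms(1) by blast
    then show "s' \<in> (\<lambda>s. s @ [(x, int n + 1)]) ` paths z (int n)" using a by auto
  qed
next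
  show "(\<lambda>s. s @ [(x, int n + 1)]) ` paths z (int n) \<subseteq> {s'\<in>paths x (int (Suc n)). fst (s'!n) = z}"
  proof
    fix s' assume "s' \<in> (\<lambda>s. s @ [(x, int n + 1)]) ` paths z (int n)"
    then obtain s where s: "s' = s @ [(x, int n + 1)]" "s \<in> paths z (int n)" by blast
    have "s' \<in> paths x (int (Suc n))" using snoc_mem[OF s(2) assms(1)] assms(2) s(1) by auto
    moreover have "s'!n = s!n" "s!n = (z, int n)" using s by (auto simp: paths_mem nth_append)
    ultimately show "s' \<in> {s'\<in>paths x (int (Suc n)). fst (s'!n) = z}" by auto
  qed
qed

lemma L_rec:
  assumes "n \<ge> 1"
  shows "Lsum u x (Suc n) = complex_of_real (edge_val u (x+1, int n) (x, int n + 1)) * (Lsum u (x+1) n + (-\<i>) * Rsum u (x+1) n)" (is "_ = ?R")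
proof -
  have "Lsum u x (Suc n) = (\<Sum>s'\<in>{s'\<in>paths x (int (Suc n)). fst (s'!n) = x+1}. wt u (Suc n) s')"
    unfolding Lsum_def by simp
  also have "\<dots> = (\<Sum>s\<in>paths (x+1) (int n). wt u (Suc n) (s @ [(x, int n + 1)]))"
    using paths_snoc_set[of n "x+1" x] assms by (simp add: sum.reindex inj_on_def)
  also have "\<dots> = ?R" by (subst sum_snoc) (use assms in auto)
  finally show ?thesis .
qed

lemma R_rec:
  assumes "n \<ge> 1"
  shows "Rsum u x (Suc n) = complex_of_real (edge_val u (x-1, int n) (x, int n + 1)) * (Rsum u (x-1) n + (-\<i>) * Lsum u (x-1) n)" (is "_ = ?R")
proof -
  have "Rsum u x (Suc n) = (\<Sum>s'\<in>{s'\<in>paths x (int (Suc n)). fst (s'!n) = x-1}. wt u (Suc n) s')"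
    unfolding Rsum_def by simp
  also have "\<dots> = (\<Sum>s\<in>paths (x-1) (int n). wt u (Suc n) (s @ [(x, int n + 1)]))"
    using paths_snoc_set[of n "x-1" x] assms by (simp add: sum.reindex inj_on_def)
  also have "\<dots> = ?R" by (subst sum_snoc) (use assms in \<open>auto simp: algebra_simps\<close>)
  finally show ?thesis .
qed

lemma paths_one: "paths z (int 1) \<subseteq> {[(0,0),(1,1)]}"
proof
  fix s assume "s \<in> paths z (int 1)"
  then have "length s = 2" "s!0 = (0,0)" "s!1 = (1,1)" unfolding paths_mem by auto
  then show "s \<in> {[(0,0),(1,1)]}"
    by (cases s; cases "tl s"; auto)
qed

lemma real_parts: "n \<ge> 1 \<Longrightarrow> Re (Lsum u z n) = 0 \<and> Im (Rsum u z n) = 0"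
proof (induction n arbitrary: z rule: nat_induct_at_least)
  case base
  have L: "{s\<in>paths z (int 1). fst (s!(1-1)) = z+1} = {}"
  proof -
    { fix s assume "s \<in> paths z (int 1)" "fst (s!(1-1)) = z+1"
      then have False unfolding paths_mem by auto }
    then show ?thesis by blast
  qed
  have e0: "{k. is_turn [(0::int,0::int),(1,1)] k} = {}" by (auto simp: is_turn_def)
  have t0: "turns [(0,0),(1,1)] = 0" unfolding turns_def e0 by simp
  have "Im (Rsum u z 1) = (\<Sum>s\<in>{s\<in>paths z (int 1). fst (s!(1-1)) = z-1}. Im (wt u 1 s))"
    unfolding Rsum_def by (simp add: Im_sum)
  also have "\<dots> = 0"
  proof (rule sum.neutral, rule ballI)
    fix s assume "s \<in> {s\<in>paths z (int 1). fst (s!(1-1)) = z-1}"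
    then have "s = [(0,0),(1,1)]" using paths_one by auto
    then show "Im (wt u 1 s) = 0" unfolding wt_def using t0 by simp
  qed
  finally have "Im (Rsum u z 1) = 0" .
  moreover have "Lsum u z 1 = 0" unfolding Lsum_def L by simp
  ultimately show ?case by simp
next
  case (Suc n)
  show ?case unfolding L_rec[OF Suc.hyps] R_rec[OF Suc.hyps] using Suc.IH by simp
qed

lemma amp_LR: "n \<ge> 1 \<Longrightarrow> amp x (int n) u = complex_of_real (2 powr ((1 - real n) / 2)) * \<i> * (Lsum u x n + Rsum u x n)"
proof -
  assume n: "n \<ge> 1"
  have "amp x (int n) u = complex_of_real (2 powr ((1 - real n) / 2)) * \<i> * (\<Sum>s\<in>paths x (int n). wt u n s)"
    unfolding amp_def wt_def by simp
  then show ?thesis unfolding split_paths[where z=x and f="wt u n", OF n] Lsum_def Rsum_def .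
qed

lemma a1_LR: "n \<ge> 1 \<Longrightarrow> a1 x (int n) u = - (2 powr ((1 - real n) / 2)) * Im (Lsum u x n)"
  unfolding a1_def amp_LR using real_parts[of n u x] by simp

lemma a2_LR: "n \<ge> 1 \<Longrightarrow> a2 x (int n) u = (2 powr ((1 - real n) / 2)) * Re (Rsum u x n)"
  unfolding a2_def amp_LR using real_parts[of n u x] by simp

lemma powr_step: "(2::real) powr ((1 - real (Suc n)) / 2) = 2 powr ((1 - real n) / 2) / sqrt 2"
proof -
  have "(1 - real (Suc n)) / 2 = (1 - real n) / 2 - 1/2" by (simp add: field_simps)
  then show ?thesis by (simp add: powr_diff powr_half_sqrt)
qed

lemma a1_step_nat:
  assumes "n \<ge> 1"
  shows "a1 x (int (Suc n)) u = edge_val u (x+1, int n) (x, int n + 1) / sqrt 2 * (a1 (x+1) (int n) u + a2 (x+1) (int n) u)"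
  unfolding a1_LR[OF assms] a2_LR[OF assms] 
  using a1_LR[of "Suc n" x u] L_rec[OF assms] powr_step real_parts[OF assms, of u "x+1"] by (simp add: algebra_simps)

lemma a2_step_nat:
  assumes "n \<ge> 1"
  shows "a2 x (int (Suc n)) u = edge_val u (x-1, int n) (x, int n + 1) / sqrt 2 * (a2 (x-1) (int n) u - a1 (x-1) (int n) u)"
  unfolding a1_LR[OF assms] a2_LR[OF assms] 
  using a2_LR[of "Suc n" x u] R_rec[OF assms] powr_step real_parts[OF assms, of u "x-1"] by (simp add: algebra_simps)

lemma u0_val: "u0 (real_of_int a + 1/2, real_of_int b + 1/2) = (if even a \<and> even b then -1 else 1)"
proof -
  have "(\<exists>x t :: int. even x \<and> even t \<and> (real_of_int a + 1/2, real_of_int b + 1/2) = (real_of_int x + 1/2, real_of_int t + 1/2))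
     \<longleftrightarrow> even a \<and> even b" by auto
  then show ?thesis unfolding u0_def by simp
qed

lemma a1_step:
  assumes "t \<ge> 1"
  shows "a1 x (t+1) u0 = (if even x \<and> even t then -1 else 1) / sqrt 2 * (a1 (x+1) t u0 + a2 (x+1) t u0)"
proof -
  define n where "n = nat t"
  have n: "t = int n" "n \<ge> 1" using assms n_def by auto
  have e: "edge_val u0 (x+1, int n) (x, int n + 1) = (if even x \<and> even t then -1 else 1)"
  proof -
    have "edge_val u0 (x+1, int n) (x, int n + 1) = u0 (real_of_int x + 1/2, real_of_int t + 1/2)"
      unfolding edge_val_def n by (simp add: field_simps)
    then show ?thesis by (simp add: u0_val)
  qed
  have tt: "t + 1 = int (Suc n)" using n by simp
  show ?thesis unfolding tt using a1_step_nat[OF n(2), of x u0] unfolding e unfolding n(1)[symmetric] .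
qed

lemma a2_step:
  assumes "t \<ge> 1"
  shows "a2 x (t+1) u0 = (if even (x-1) \<and> even t then -1 else 1) / sqrt 2 * (a2 (x-1) t u0 - a1 (x-1) t u0)"
proof -
  define n where "n = nat t"
  have n: "t = int n" "n \<ge> 1" using assms n_def by auto
  have e: "edge_val u0 (x-1, int n) (x, int n + 1) = (if even (x-1) \<and> even t then -1 else 1)"
  proof -
    have "edge_val u0 (x-1, int n) (x, int n + 1) = u0 (real_of_int (x-1) + 1/2, real_of_int t + 1/2)"
      unfolding edge_val_def n by (simp add: field_simps)
    then show ?thesis using u0_val[of "x-1" t] by simp
  qed
  have tt: "t + 1 = int (Suc n)" using n by simp
  show ?thesis unfolding tt using a2_step_nat[OF n(2), of x u0] unfolding e unfolding n(1)[symmetric] .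
qed

lemma two_step:
  assumes "odd y" "odd s" "s \<ge> 3"
  shows "a1 y s u0 = ((a1 (y+2) (s-2) u0 + a2 (y+2) (s-2) u0) + (a2 y (s-2) u0 - a1 y (s-2) u0))/2"
    and "a2 y s u0 = ((a1 y (s-2) u0 + a2 y (s-2) u0) + (a1 (y-2) (s-2) u0 - a2 (y-2) (s-2) u0))/2"
proof -
  have r: "sqrt 2 * sqrt 2 = (2::real)" by simp
  have o1: "odd (s-2)" "even (s-1)" "even (y+1)" "even (y-1)" "odd (y-2)" using assms by presburger+
  have A: "a1 y s u0 = 1/sqrt 2 * (a1 (y+1) (s-1) u0 + a2 (y+1) (s-1) u0)"
    using a1_step[of "s-1" y] assms by simp
  have B: "a1 (y+1) (s-1) u0 = 1/sqrt 2 * (a1 (y+2) (s-2) u0 + a2 (y+2) (s-2) u0)"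
    using a1_step[of "s-2" "y+1"] assms o1 by (simp add: add.assoc)
  have C: "a2 (y+1) (s-1) u0 = 1/sqrt 2 * (a2 y (s-2) u0 - a1 y (s-2) u0)"
    using a2_step[of "s-2" "y+1"] assms o1 by simp
  show "a1 y s u0 = ((a1 (y+2) (s-2) u0 + a2 (y+2) (s-2) u0) + (a2 y (s-2) u0 - a1 y (s-2) u0))/2"
    unfolding A B C by (simp add: field_simps r)
  have D: "a2 y s u0 = -1/sqrt 2 * (a2 (y-1) (s-1) u0 - a1 (y-1) (s-1) u0)"
    using a2_step[of "s-1" y] assms o1 by simp
  have E: "a1 (y-1) (s-1) u0 = 1/sqrt 2 * (a1 y (s-2) u0 + a2 y (s-2) u0)"
    using a1_step[of "s-2" "y-1"] assms o1 by simp
  have F: "a2 (y-1) (s-1) u0 = 1/sqrt 2 * (a2 (y-2) (s-2) u0 - a1 (y-2) (s-2) u0)"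
    using a2_step[of "s-2" "y-1"] assms o1 by (simp add: algebra_simps)
  show "a2 y s u0 = ((a1 y (s-2) u0 + a2 y (s-2) u0) + (a1 (y-2) (s-2) u0 - a2 (y-2) (s-2) u0))/2"
    unfolding D E F by (simp add: field_simps r)
qed

lemma paths_one_empty: "y \<noteq> 1 \<Longrightarrow> paths y (int 1) = {}"
proof -
  assume y: "y \<noteq> 1"
  { fix s assume "s \<in> paths y (int 1)"
    then have "s!1 = (1,1)" "s!1 = (y, int 1)" unfolding paths_mem by auto
    then have False using y by simp }
  then show ?thesis by blast
qed

lemma a1_one: "a1 y 1 u0 = 0"
proof -
  have E: "{s\<in>paths y (int 1). fst (s!(1-1)) = y+1} = {}"
  proof -
    { fix s assume "s \<in> paths y (int 1)" "fst (s!(1-1)) = y+1"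
      then have False unfolding paths_mem by auto }
    then show ?thesis by blast
  qed
  have "Lsum u0 y 1 = 0" unfolding Lsum_def E by simp
  then show ?thesis using a1_LR[of 1 y u0] by simp
qed

lemma a2_one: "y \<noteq> 1 \<Longrightarrow> a2 y 1 u0 = 0"
proof -
  assume "y \<noteq> 1"
  then have "Rsum u0 y 1 = 0" unfolding Rsum_def using paths_one_empty[of y] by simp
  then show ?thesis using a2_LR[of 1 y u0] by simp
qed

definition Pinv :: "int \<Rightarrow> bool" where
  "Pinv s \<longleftrightarrow> (\<forall>y. odd y \<longrightarrow> ((y + s) mod 4 = 0 \<longrightarrow> a1 y s u0 = a2 y s u0)
      \<and> ((y + s) mod 4 = 2 \<longrightarrow> a1 y s u0 = a1 (y+2) s u0))"

lemma Pinv_all: "Pinv (2 * int m + 1)"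
proof (induction m)
  case 0
  show ?case unfolding Pinv_def
  proof (intro allI impI conjI)
    fix y :: int assume "odd y" "(y + (2 * int 0 + 1)) mod 4 = 0"
    then have "y \<noteq> 1" by auto
    then show "a1 y (2 * int 0 + 1) u0 = a2 y (2 * int 0 + 1) u0" using a1_one a2_one by simp
  next
    fix y :: int
    show "a1 y (2 * int 0 + 1) u0 = a1 (y + 2) (2 * int 0 + 1) u0" using a1_one by simp
  qed
next
  case (Suc m)
  define S where "S = 2 * int (Suc m) + 1"
  have S2: "S - 2 = 2 * int m + 1" unfolding S_def by simp
  have oS: "odd S" "S \<ge> 3" unfolding S_def by auto
  have PS: "Pinv (S-2)" unfolding S2 by (rule Suc.IH)
  have IH1: "a1 y (S-2) u0 = a2 y (S-2) u0" if "odd y" "(y + (S-2)) mod 4 = 0" for y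
  proof -
    have "((y + (S-2)) mod 4 = 0 \<longrightarrow> a1 y (S-2) u0 = a2 y (S-2) u0)"
      using PS[unfolded Pinv_def, rule_format, OF that(1)] by (rule conjunct1)
    then show ?thesis using that(2) by (rule mp)
  qed
  have IH2: "a1 y (S-2) u0 = a1 (y+2) (S-2) u0" if "odd y" "(y + (S-2)) mod 4 = 2" for y
  proof -
    have "((y + (S-2)) mod 4 = 2 \<longrightarrow> a1 y (S-2) u0 = a1 (y+2) (S-2) u0)"
      using PS[unfolded Pinv_def, rule_format, OF that(1)] by (rule conjunct2)
    then show ?thesis using that(2) by (rule mp)
  qed
  have "Pinv S" unfolding Pinv_def
  proof (intro allI impI conjI)
    fix y :: int assume y: "odd y" "(y + S) mod 4 = 0"
    have o: "odd (y+2)" "odd (y-2)" using y(1) by presburger+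
    have m: "(y + (S-2)) mod 4 = 2" "(y + 2 + (S-2)) mod 4 = 0" "(y - 2 + (S-2)) mod 4 = 0"
      using y(2) by presburger+
    have h1: "a1 y (S-2) u0 = a1 (y+2) (S-2) u0" by (rule IH2[OF y(1) m(1)])
    have h2: "a1 (y+2) (S-2) u0 = a2 (y+2) (S-2) u0" by (rule IH1[OF o(1) m(2)])
    have h3: "a1 (y-2) (S-2) u0 = a2 (y-2) (S-2) u0" by (rule IH1[OF o(2) m(3)])
    show "a1 y S u0 = a2 y S u0" using two_step[OF y(1) oS] h1 h2 h3 by (simp add: field_simps)
  next
    fix y :: int assume y: "odd y" "(y + S) mod 4 = 2"
    have o: "odd (y+2)" "odd (y+2+2)" using y(1) by presburger+
    have m: "(y + (S-2)) mod 4 = 0" "(y + 2 + (S-2)) mod 4 = 2" "(y + 2 + 2 + (S-2)) mod 4 = 0"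
      using y(2) by presburger+
    have h1: "a1 y (S-2) u0 = a2 y (S-2) u0" by (rule IH1[OF y(1) m(1)])
    have h2: "a1 (y+2) (S-2) u0 = a1 (y+2+2) (S-2) u0" by (rule IH2[OF o(1) m(2)])
    have h3: "a1 (y+2+2) (S-2) u0 = a2 (y+2+2) (S-2) u0" by (rule IH1[OF o(2) m(3)])
    show "a1 y S u0 = a1 (y+2) S u0" using two_step(1)[OF y(1) oS] two_step(1)[OF o(1) oS] h1 h2 h3 by (simp add: field_simps)
  qed
  then show ?case unfolding S_def .
qed

theorem proposition11:
  fixes x t :: int
  assumes "even (x + t)" and "t > 1"
  shows "b1 x t = (b1 (x + 1) (t - 1) + b2 (x + 1) (t - 1)) / 2
       \<and> b2 x t = (3 * b1 (x - 1) (t - 1) - b2 (x - 1) (t - 1)) / 2"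
proof -
  define y where "y = 2*x - 1"
  define s where "s = 2*t - 1"
  have oy: "odd y" and os: "odd s" "s \<ge> 3" unfolding y_def s_def using assms by auto
  have s2: "s - 2 = 2 * int (nat (t - 2)) + 1" unfolding s_def using assms by simp
  have P: "Pinv (s-2)" unfolding s2 by (rule Pinv_all)
  have m0: "(y + (s-2)) mod 4 = 0" unfolding y_def s_def using assms(1) by presburger
  have m2: "(y - 2 + (s-2)) mod 4 = 2" unfolding y_def s_def using assms(1) by presburger
  have oy2: "odd (y-2)" using oy by presburger
  have h1: "a1 y (s-2) u0 = a2 y (s-2) u0"
    using mp[OF conjunct1[OF P[unfolded Pinv_def, rule_format, OF oy]] m0] .
  have h2: "a1 (y-2) (s-2) u0 = a1 (y-2+2) (s-2) u0"
    using mp[OF conjunct2[OF P[unfolded Pinv_def, rule_format, OF oy2]] m2] .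
  have B0: "b1 x t = a1 y s u0" "b2 x t = a2 y s u0" unfolding b1_def b2_def y_def s_def using assms by auto
  have B1: "b1 (x+1) (t-1) = a1 (y+2) (s-2) u0" "b2 (x+1) (t-1) = a2 (y+2) (s-2) u0"
    unfolding b1_def b2_def y_def s_def using assms by (auto simp: algebra_simps)
  have B2: "b1 (x-1) (t-1) = a1 (y-2) (s-2) u0" "b2 (x-1) (t-1) = a2 (y-2) (s-2) u0"
    unfolding b1_def b2_def y_def s_def using assms by (auto simp: algebra_simps)
  show ?thesis unfolding B0 B1 B2 using two_step[OF oy os] h1 h2 by simp
qed

end
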